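(* Every acyclic unique sink orientation of the $n$-dimensional cube with $n \geq 4$ is $(n-2)$-nice.
   Context: Let $Q^n = 2^{[n]}$ be the vertex set of the $n$-cube, with $u,v$ adjacent iff $|u\oplus v|=1$; faces are $F_{J,v}=\{u : v\oplus u\subseteq J\}$ for $J\subseteq[n]$. A unique sink orientation (USO) is an orientation of the cube's edges such that every nonempty face has a unique sink (vertex with no outgoing edges within the face); it is acyclic (an AUSO) if it has no directed cycle. The outmap $s_\psi(v)$ is the set of coordinates $j$ such that the edge $\{v,v\oplus\{j\}\}$ is directed away from $v$; the global sink is the vertex $t$ with $s_\psi(t)=\emptyset$. Let $d(v,u)$ be the length of a shortest directed path from $v$ to $u$ ($\infty$ if none). The reachmap is $r_\psi(v)=s_\psi(v)\cup\{j : \exists u \text{ reachable from } v \text{ by a directed path with } j\in s_\psi(u)\}$. A vertex $v$ is $i$-covered by $u$ if $d(v,u)\le i$ and $r_\psi(u)\subsetneq r_\psi(v)$; $\psi$ is $i$-nice if every vertex other than the global sink is $i$-covered by some vertex. *)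

theory Defs
  imports Main
begin

definition cube :: "nat \<Rightarrow> nat set set" where
  "cube n = Pow {1..n}"

definition symdiff :: "nat set \<Rightarrow> nat set \<Rightarrow> nat set" where
  "symdiff u v = (u - v) \<union> (v - u)"

definition adjacent :: "nat \<Rightarrow> nat set \<Rightarrow> nat set \<Rightarrow> bool" where
  "adjacent n u v \<longleftrightarrow> u \<in> cube n \<and> v \<in> cube n \<and> card (symdiff u v) = 1"

definition face :: "nat \<Rightarrow> nat set \<Rightarrow> nat set \<Rightarrow> nat set set" where
  "face n J v = {u \<in> cube n. symdiff v u \<subseteq> J}"

(* An orientation of the n-cube: arc u w means the edge {u,w} is directed from u to w. *)
definition orientation :: "nat \<Rightarrow> (nat set \<Rightarrow> nat set \<Rightarrow> bool) \<Rightarrow> bool" where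
  "orientation n arc \<longleftrightarrow>
     (\<forall>u w. arc u w \<longrightarrow> adjacent n u w) \<and>
     (\<forall>u w. adjacent n u w \<longrightarrow> (arc u w \<longleftrightarrow> \<not> arc w u))"

definition is_sink_in :: "(nat set \<Rightarrow> nat set \<Rightarrow> bool) \<Rightarrow> nat set set \<Rightarrow> nat set \<Rightarrow> bool" where
  "is_sink_in arc F u \<longleftrightarrow> u \<in> F \<and> (\<forall>w\<in>F. \<not> arc u w)"

definition USO :: "nat \<Rightarrow> (nat set \<Rightarrow> nat set \<Rightarrow> bool) \<Rightarrow> bool" where
  "USO n arc \<longleftrightarrow> orientation n arc \<and>
     (\<forall>J v. J \<subseteq> {1..n} \<and> v \<in> cube n \<and> face n J v \<noteq> {} \<longrightarrow>
        (\<exists>!u. is_sink_in arc (face n J v) u))"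

definition arcs :: "(nat set \<Rightarrow> nat set \<Rightarrow> bool) \<Rightarrow> (nat set \<times> nat set) set" where
  "arcs arc = {(u, w). arc u w}"

definition AUSO :: "nat \<Rightarrow> (nat set \<Rightarrow> nat set \<Rightarrow> bool) \<Rightarrow> bool" where
  "AUSO n arc \<longleftrightarrow> USO n arc \<and> (\<forall>v. (v, v) \<notin> (arcs arc)\<^sup>+)"

definition outmap :: "nat \<Rightarrow> (nat set \<Rightarrow> nat set \<Rightarrow> bool) \<Rightarrow> nat set \<Rightarrow> nat set" where
  "outmap n arc v = {j \<in> {1..n}. arc v (symdiff v {j})}"

definition reachmap :: "nat \<Rightarrow> (nat set \<Rightarrow> nat set \<Rightarrow> bool) \<Rightarrow> nat set \<Rightarrow> nat set" where
  "reachmap n arc v = outmap n arc v \<union>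
     {j. \<exists>u. (v, u) \<in> (arcs arc)\<^sup>+ \<and> j \<in> outmap n arc u}"

definition dist_le :: "(nat set \<Rightarrow> nat set \<Rightarrow> bool) \<Rightarrow> nat set \<Rightarrow> nat set \<Rightarrow> nat \<Rightarrow> bool" where
  "dist_le arc v u i \<longleftrightarrow> (\<exists>k\<le>i. (v, u) \<in> (arcs arc) ^^ k)"

definition covered :: "nat \<Rightarrow> (nat set \<Rightarrow> nat set \<Rightarrow> bool) \<Rightarrow> nat \<Rightarrow> nat set \<Rightarrow> nat set \<Rightarrow> bool" where
  "covered n arc i v u \<longleftrightarrow> dist_le arc v u i \<and> reachmap n arc u \<subset> reachmap n arc v"

definition global_sink :: "nat \<Rightarrow> (nat set \<Rightarrow> nat set \<Rightarrow> bool) \<Rightarrow> nat set \<Rightarrow> bool" where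
  "global_sink n arc t \<longleftrightarrow> t \<in> cube n \<and> outmap n arc t = {}"

definition nice :: "nat \<Rightarrow> (nat set \<Rightarrow> nat set \<Rightarrow> bool) \<Rightarrow> nat \<Rightarrow> bool" where
  "nice n arc i \<longleftrightarrow>
     (\<forall>v\<in>cube n. \<not> global_sink n arc v \<longrightarrow> (\<exists>u\<in>cube n. covered n arc i v u))"

end

theory Submission
  imports Defs
begin


lemma symdiff_iff [simp]: "x \<in> symdiff u v \<longleftrightarrow> (x \<in> u \<longleftrightarrow> x \<notin> v)"
  by (auto simp: symdiff_def)

lemma cube_iff: "u \<in> cube n \<longleftrightarrow> u \<subseteq> {1..n}"
  by (simp add: cube_def)

lemma symdiff_self [simp]: "symdiff u u = {}"
  by (auto simp: symdiff_def)

lemma symdiff_cube: "u \<in> cube n \<Longrightarrow> w \<in> cube n \<Longrightarrow> symdiff u w \<subseteq> {1..n}"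
  unfolding cube_iff symdiff_def by blast

lemma symdiff_in_cube: "u \<in> cube n \<Longrightarrow> S \<subseteq> {1..n} \<Longrightarrow> symdiff u S \<in> cube n"
  unfolding cube_iff symdiff_def by blast

lemma finite_symdiff: "u \<in> cube n \<Longrightarrow> w \<in> cube n \<Longrightarrow> finite (symdiff u w)"
  by (rule finite_subset[OF symdiff_cube finite_atLeastAtMost])

lemma adjacent_iff:
  "adjacent n u w \<longleftrightarrow> u \<in> cube n \<and> (\<exists>c\<in>{1..n}. w = symdiff u {c})"
proof
  assume a: "adjacent n u w"
  then have u: "u \<in> cube n" and w: "w \<in> cube n" and c1: "card (symdiff u w) = 1"
    unfolding adjacent_def by blast+
  from c1 obtain c where c: "symdiff u w = {c}" by (auto simp: card_1_singleton_iff)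
  have "c \<in> {1..n}" using symdiff_cube[OF u w] c by blast
  moreover have "w = symdiff u {c}"
  proof (rule set_eqI)
    fix x
    have "x \<in> symdiff u w \<longleftrightarrow> x = c" using c by blast
    then show "x \<in> w \<longleftrightarrow> x \<in> symdiff u {c}" by simp blast
  qed
  ultimately show "u \<in> cube n \<and> (\<exists>c\<in>{1..n}. w = symdiff u {c})" using u by blast
next
  assume "u \<in> cube n \<and> (\<exists>c\<in>{1..n}. w = symdiff u {c})"
  then obtain c where u: "u \<in> cube n" and c: "c \<in> {1..n}" and w: "w = symdiff u {c}" by blast
  have "w \<in> cube n" using u c w symdiff_in_cube[of u n "{c}"] by blast
  moreover have "symdiff u w = {c}"
  proof (rule set_eqI)
    fix x show "x \<in> symdiff u w \<longleftrightarrow> x \<in> {c}" using w by auto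
  qed
  ultimately show "adjacent n u w" using u by (simp add: adjacent_def)
qed

locale auso =
  fixes n :: nat and arc :: "nat set \<Rightarrow> nat set \<Rightarrow> bool"
  assumes AU: "AUSO n arc"
begin

lemma uso: "USO n arc"
  using AU unfolding AUSO_def by (rule conjunct1)

lemma orient: "orientation n arc"
  using uso unfolding USO_def by (rule conjunct1)

lemma acyc: "(v,v) \<notin> (arcs arc)\<^sup>+"
  using AU unfolding AUSO_def by simp

lemma arcs_iff [simp]: "(x,y) \<in> arcs arc \<longleftrightarrow> arc x y"
  by (simp add: arcs_def)

lemma arc_adj: "arc u w \<Longrightarrow> adjacent n u w"
  using orient unfolding orientation_def by metis

lemma orient2: "adjacent n u w \<Longrightarrow> arc u w \<longleftrightarrow> \<not> arc w u"
  using orient unfolding orientation_def by metis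

lemma arc_D: "arc u w \<Longrightarrow> u \<in> cube n \<and> (\<exists>c\<in>{1..n}. w = symdiff u {c})"
  using arc_adj adjacent_iff by blast

lemma arc_cube1: "arc u w \<Longrightarrow> u \<in> cube n"
  using arc_D by blast

lemma arc_cube2: "arc u w \<Longrightarrow> w \<in> cube n"
  using arc_adj by (auto simp: adjacent_def)

lemma adj_flip: "u \<in> cube n \<Longrightarrow> c \<in> {1..n} \<Longrightarrow> adjacent n u (symdiff u {c})"
  using adjacent_iff by blast

lemma arc_asym: "arc u w \<Longrightarrow> \<not> arc w u"
  using orient2 arc_adj by metis

lemma arc_total: "u \<in> cube n \<Longrightarrow> c \<in> {1..n} \<Longrightarrow> \<not> arc u (symdiff u {c}) \<Longrightarrow> arc (symdiff u {c}) u"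
  using orient2 adj_flip by metis

lemma outmap_iff: "c \<in> outmap n arc v \<longleftrightarrow> c \<in> {1..n} \<and> arc v (symdiff v {c})"
  by (simp add: outmap_def)

lemma outmap_sub: "outmap n arc v \<subseteq> {1..n}"
  by (auto simp: outmap_def)

lemma arc_outmap: "arc u w \<Longrightarrow> \<exists>c. c \<in> outmap n arc u \<and> w = symdiff u {c}"
  using arc_D outmap_iff by blast

lemma face_self: "v \<in> cube n \<Longrightarrow> v \<in> face n J v"
  by (auto simp: face_def symdiff_def)

lemma sink_char:
  assumes J: "J \<subseteq> {1..n}" and w: "w \<in> face n J v"
  shows "is_sink_in arc (face n J v) w \<longleftrightarrow> outmap n arc w \<inter> J = {}"
proof
  assume s: "is_sink_in arc (face n J v) w"
  show "outmap n arc w \<inter> J = {}"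
  proof (rule ccontr)
    assume "outmap n arc w \<inter> J \<noteq> {}"
    then obtain c where c: "c \<in> outmap n arc w" "c \<in> J" by blast
    have wc: "w \<in> cube n" "symdiff v w \<subseteq> J" using w by (auto simp: face_def)
    have "{c} \<subseteq> {1..n}" using c J by blast
    then have "symdiff w {c} \<in> cube n" using symdiff_in_cube wc by blast
    moreover have "symdiff v (symdiff w {c}) \<subseteq> J"
    proof
      fix x assume "x \<in> symdiff v (symdiff w {c})"
      then show "x \<in> J" using wc c by (cases "x = c") auto
    qed
    ultimately have "symdiff w {c} \<in> face n J v" by (simp add: face_def)
    moreover have "arc w (symdiff w {c})" using c outmap_iff by blast
    ultimately show False using s by (auto simp: is_sink_in_def)
  qed
next
  assume o: "outmap n arc w \<inter> J = {}"
  have wc: "w \<in> cube n" "symdiff v w \<subseteq> J" using w by (auto simp: face_def)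
  show "is_sink_in arc (face n J v) w"
    unfolding is_sink_in_def
  proof (intro conjI ballI notI)
    show "w \<in> face n J v" by fact
  next
    fix u assume u: "u \<in> face n J v" and a: "arc w u"
    obtain c where c: "c \<in> outmap n arc w" "u = symdiff w {c}" using arc_outmap[OF a] by blast
    have uc: "symdiff v u \<subseteq> J" using u by (auto simp: face_def)
    have "c \<in> J"
    proof (cases "c \<in> v \<longleftrightarrow> c \<in> w")
      case True
      then have "c \<in> symdiff v u" using c(2) by auto
      then show ?thesis using uc by blast
    next
      case False
      then have "c \<in> symdiff v w" by auto
      then show ?thesis using wc by blast
    qed
    then show False using o c by blast
  qed
qed

lemma face_nonempty: "v \<in> cube n \<Longrightarrow> face n J v \<noteq> {}"
  using face_self by (metis empty_iff)

lemma uso2: "\<forall>J v. J \<subseteq> {1..n} \<and> v \<in> cube n \<and> face n J v \<noteq> {} \<longrightarrow>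
        (\<exists>!u. is_sink_in arc (face n J v) u)"
  using uso unfolding USO_def by (rule conjunct2)

lemma ex1_sink: "J \<subseteq> {1..n} \<Longrightarrow> v \<in> cube n \<Longrightarrow> \<exists>!x. is_sink_in arc (face n J v) x"
proof -
  assume J: "J \<subseteq> {1..n}" and v: "v \<in> cube n"
  have ne: "face n J v \<noteq> {}" using face_nonempty[OF v] .
  show ?thesis using uso2[rule_format, OF conjI[OF J conjI[OF v ne]]] .
qed

lemma ex_sink: "J \<subseteq> {1..n} \<Longrightarrow> v \<in> cube n \<Longrightarrow> \<exists>x. is_sink_in arc (face n J v) x"
  using ex1_sink by (rule ex1_implies_ex)

lemma unique_sink: "J \<subseteq> {1..n} \<Longrightarrow> v \<in> cube n \<Longrightarrow> is_sink_in arc (face n J v) x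
   \<Longrightarrow> is_sink_in arc (face n J v) y \<Longrightarrow> x = y"
proof -
  assume "J \<subseteq> {1..n}" "v \<in> cube n" "is_sink_in arc (face n J v) x" "is_sink_in arc (face n J v) y"
  moreover have "\<exists>!x. is_sink_in arc (face n J v) x" using ex1_sink calculation by blast
  ultimately show "x = y" by blast
qed

lemma path:
  assumes "x \<in> cube n" "w \<in> cube n" "outmap n arc w \<inter> symdiff x w = {}"
  shows "(x,w) \<in> (arcs arc) ^^ card (symdiff x w)"
  using assms
proof (induction "card (symdiff x w)" arbitrary: x)
  case 0
  have "finite (symdiff x w)" using finite_symdiff 0 by blast
  then have "symdiff x w = {}" using 0 by simp
  then have "x = w" by (auto simp: set_eq_iff)
  then show ?case using 0 by simp
next
  case (Suc m)
  define J where "J = symdiff x w"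
  have J: "J \<subseteq> {1..n}" using symdiff_cube Suc J_def by blast
  have wF: "w \<in> face n J x" using Suc J_def by (auto simp: face_def)
  have ws: "is_sink_in arc (face n J x) w" using sink_char[OF J wF] Suc J_def by blast
  have xw: "x \<noteq> w" using Suc by auto
  have xF: "x \<in> face n J x" using face_self Suc by blast
  have "\<not> is_sink_in arc (face n J x) x" using unique_sink[OF J _ ws] Suc(3) xw by blast
  then obtain c where c: "c \<in> outmap n arc x" "c \<in> J" using sink_char[OF J xF] by blast
  define u where "u = symdiff x {c}"
  have axu: "arc x u" using c outmap_iff u_def by blast
  have su: "symdiff u w = J - {c}" using c(2) unfolding u_def J_def by auto
  have fin: "finite J" using finite_symdiff Suc J_def by blast
  have cu: "card (symdiff u w) = m" using su c(2) fin Suc(2) J_def by simp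
  have ucube: "u \<in> cube n" using arc_cube2 axu by blast
  have "outmap n arc w \<inter> symdiff u w = {}" using su Suc(5) J_def by auto
  then have "(u,w) \<in> (arcs arc) ^^ m" using Suc(1)[of u] cu ucube Suc(4) by simp
  then have "(x,w) \<in> (arcs arc) ^^ Suc m" using axu relpow_Suc_I2[of x u "arcs arc"] by simp
  then show ?case unfolding Suc(2)[symmetric] .
qed

lemma path_rt:
  "x \<in> cube n \<Longrightarrow> w \<in> cube n \<Longrightarrow> outmap n arc w \<inter> symdiff x w = {} \<Longrightarrow> (x,w) \<in> (arcs arc)\<^sup>*"
  using path relpow_imp_rtrancl by blast

lemma ex_gsink: "\<exists>t. t \<in> cube n \<and> outmap n arc t = {}"
proof -
  have e: "{} \<in> cube n" by (simp add: cube_iff)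
  obtain t where t: "is_sink_in arc (face n {1..n} {}) t" using ex_sink[OF _ e] by blast
  have tf: "t \<in> face n {1..n} {}" using t by (simp add: is_sink_in_def)
  then have "t \<in> cube n" by (simp add: face_def)
  moreover have "outmap n arc t \<inter> {1..n} = {}" using sink_char[OF _ tf] t by blast
  ultimately show ?thesis using outmap_sub by blast
qed

end




locale auso_t = auso +
  fixes t :: "nat set"
  assumes t_cube: "t \<in> cube n" and t_out: "outmap n arc t = {}"
begin

lemma no_arc_t: "\<not> arc t y"
proof
  assume "arc t y"
  then obtain c where "c \<in> outmap n arc t" using arc_outmap by blast
  then show False using t_out by blast
qed

lemma gsink_unique: assumes x: "x \<in> cube n" and o: "outmap n arc x = {}" shows "x = t"
proof -
  have J: "{1..n} \<subseteq> {1..n}" by (rule subset_refl)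
  have xF: "x \<in> face n {1..n} t" using x symdiff_cube[OF t_cube x] by (simp add: face_def)
  have tF: "t \<in> face n {1..n} t" using face_self[OF t_cube] .
  have "is_sink_in arc (face n {1..n} t) x" using sink_char[OF J xF] o by simp
  moreover have "is_sink_in arc (face n {1..n} t) t" using sink_char[OF J tF] t_out by simp
  ultimately show ?thesis using unique_sink[OF J t_cube] by blast
qed

lemma ex_q: assumes c: "c \<in> {1..n}" shows "\<exists>x. x \<in> cube n \<and> outmap n arc x = {c} \<and> c \<in> symdiff x t"
proof -
  define J where "J = {1..n} - {c}"
  define y where "y = symdiff t {c}"
  have J: "J \<subseteq> {1..n}" unfolding J_def by blast
  have yc: "y \<in> cube n" unfolding y_def using symdiff_in_cube[OF t_cube, of "{c}"] c by blast
  obtain x where xs: "is_sink_in arc (face n J y) x" using ex_sink[OF J yc] by blast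
  have xF: "x \<in> face n J y" using xs by (simp add: is_sink_in_def)
  then have xc: "x \<in> cube n" and sx: "symdiff y x \<subseteq> J" by (simp_all add: face_def)
  have "c \<notin> symdiff y x" using sx unfolding J_def by blast
  then have cx: "c \<in> symdiff x t" unfolding y_def by simp
  have "outmap n arc x \<inter> J = {}" using sink_char[OF J xF] xs by blast
  then have o1: "outmap n arc x \<subseteq> {c}" using outmap_sub unfolding J_def by blast
  have "x \<noteq> t" using cx by auto
  then have "outmap n arc x \<noteq> {}" using gsink_unique xc by blast
  then have "outmap n arc x = {c}" using o1 by blast
  then show ?thesis using xc cx by blast
qed

definition q where "q c = (SOME x. x \<in> cube n \<and> outmap n arc x = {c} \<and> c \<in> symdiff x t)"

lemma q: "c \<in> {1..n} \<Longrightarrow> q c \<in> cube n \<and> outmap n arc (q c) = {c} \<and> c \<in> symdiff (q c) t"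
  unfolding q_def by (rule someI_ex) (rule ex_q)

lemma q_cube: "c \<in> {1..n} \<Longrightarrow> q c \<in> cube n" using q by blast
lemma q_out: "c \<in> {1..n} \<Longrightarrow> outmap n arc (q c) = {c}" using q by blast
lemma q_side: "c \<in> {1..n} \<Longrightarrow> c \<in> symdiff (q c) t" using q by blast

lemma reach_cube: "(x,y) \<in> (arcs arc)\<^sup>* \<Longrightarrow> x \<in> cube n \<Longrightarrow> y \<in> cube n"
  by (induction rule: rtrancl_induct) (auto dest: arc_cube2)

lemma reach_step: "(x,y) \<in> (arcs arc)\<^sup>* \<Longrightarrow> arc y z \<Longrightarrow> (x,z) \<in> (arcs arc)\<^sup>*"
  by (simp add: rtrancl_into_rtrancl)

lemma cyc: "arc x y \<Longrightarrow> (y,x) \<in> (arcs arc)\<^sup>* \<Longrightarrow> False"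
proof -
  assume "arc x y" "(y,x) \<in> (arcs arc)\<^sup>*"
  then have "(x,x) \<in> (arcs arc)\<^sup>+" using rtrancl_into_trancl2[of x y "arcs arc" x] by simp
  then show False using acyc by blast
qed

lemma antisym_reach: "(x,y) \<in> (arcs arc)\<^sup>* \<Longrightarrow> (y,x) \<in> (arcs arc)\<^sup>* \<Longrightarrow> x = y"
proof (rule ccontr)
  assume a: "(x,y) \<in> (arcs arc)\<^sup>*" "(y,x) \<in> (arcs arc)\<^sup>*" "x \<noteq> y"
  then have "(x,y) \<in> (arcs arc)\<^sup>+" using rtranclD by metis
  then have "(x,x) \<in> (arcs arc)\<^sup>+" using trancl_rtrancl_trancl a(2) by metis
  then show False using acyc by blast
qed

lemma reachmap_sub: "reachmap n arc x \<subseteq> {1..n}"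
  unfolding reachmap_def using outmap_sub by blast

lemma outmap_reachmap: "outmap n arc x \<subseteq> reachmap n arc x"
  unfolding reachmap_def by blast

lemma reachmap_D: "c \<in> reachmap n arc x \<Longrightarrow> \<exists>y. (x,y) \<in> (arcs arc)\<^sup>* \<and> c \<in> outmap n arc y"
  unfolding reachmap_def by (blast intro: trancl_into_rtrancl)

lemma reachmap_I: "(x,y) \<in> (arcs arc)\<^sup>* \<Longrightarrow> c \<in> outmap n arc y \<Longrightarrow> c \<in> reachmap n arc x"
proof -
  assume a: "(x,y) \<in> (arcs arc)\<^sup>*" "c \<in> outmap n arc y"
  from rtranclD[OF a(1)] show ?thesis
  proof
    assume "x = y" then show ?thesis using a(2) outmap_reachmap by blast
  next
    assume "x \<noteq> y \<and> (x, y) \<in> (arcs arc)\<^sup>+"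
    then show ?thesis using a(2) unfolding reachmap_def by blast
  qed
qed

lemma reachmap_iff: assumes x: "x \<in> cube n" and c: "c \<in> {1..n}"
  shows "c \<in> reachmap n arc x \<longleftrightarrow> (x, q c) \<in> (arcs arc)\<^sup>*"
proof
  assume "c \<in> reachmap n arc x"
  then obtain y where y: "(x,y) \<in> (arcs arc)\<^sup>*" "c \<in> outmap n arc y" using reachmap_D by blast
  have yc: "y \<in> cube n" using reach_cube[OF y(1) x] .
  have ay: "arc y (symdiff y {c})" using y(2) outmap_iff by blast
  have y2: "(x, symdiff y {c}) \<in> (arcs arc)\<^sup>*" using reach_step[OF y(1) ay] .
  obtain z where z: "(x,z) \<in> (arcs arc)\<^sup>*" "z \<in> cube n" "c \<in> symdiff z t"
  proof (cases "c \<in> symdiff y t")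
    case True then show ?thesis using that y(1) yc by blast
  next
    case False
    then have "c \<in> symdiff (symdiff y {c}) t" by simp
    moreover have "symdiff y {c} \<in> cube n" using arc_cube2[OF ay] .
    ultimately show ?thesis using that y2 by blast
  qed
  have "c \<notin> symdiff z (q c)" using z(3) q_side[OF c] by simp
  then have "outmap n arc (q c) \<inter> symdiff z (q c) = {}" using q_out[OF c] by auto
  then have "(z, q c) \<in> (arcs arc)\<^sup>*" using path_rt[OF z(2) q_cube[OF c]] by blast
  then show "(x, q c) \<in> (arcs arc)\<^sup>*" using z(1) by (rule rtrancl_trans[rotated])
next
  assume "(x, q c) \<in> (arcs arc)\<^sup>*"
  moreover have "c \<in> outmap n arc (q c)" using q_out[OF c] by blast
  ultimately show "c \<in> reachmap n arc x" by (rule reachmap_I)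
qed

lemma reachmap_mono: assumes r: "(x,y) \<in> (arcs arc)\<^sup>*" and x: "x \<in> cube n"
  shows "reachmap n arc y \<subseteq> reachmap n arc x"
proof
  fix c assume c: "c \<in> reachmap n arc y"
  have cn: "c \<in> {1..n}" using c reachmap_sub by blast
  have y: "y \<in> cube n" using reach_cube[OF r x] .
  have "(y, q c) \<in> (arcs arc)\<^sup>*" using reachmap_iff[OF y cn] c by blast
  then have "(x, q c) \<in> (arcs arc)\<^sup>*" using r by (rule rtrancl_trans[rotated])
  then show "c \<in> reachmap n arc x" using reachmap_iff[OF x cn] by blast
qed

lemma reachmap_step: "c \<in> reachmap n arc x \<Longrightarrow> c \<in> outmap n arc x \<or> (\<exists>y. arc x y \<and> c \<in> reachmap n arc y)"
proof -
  assume "c \<in> reachmap n arc x"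
  then obtain u where u: "(x,u) \<in> (arcs arc)\<^sup>*" "c \<in> outmap n arc u" using reachmap_D by blast
  from rtranclD[OF u(1)] show ?thesis
  proof
    assume "x = u" then show ?thesis using u(2) by blast
  next
    assume "x \<noteq> u \<and> (x, u) \<in> (arcs arc)\<^sup>+"
    then obtain y where "(x,y) \<in> arcs arc" "(y,u) \<in> (arcs arc)\<^sup>*" using tranclD by metis
    then show ?thesis using reachmap_I u(2) by auto
  qed
qed

lemma reachmap_t: "reachmap n arc t = {}"
proof -
  have "c \<notin> reachmap n arc t" for c
    using reachmap_step[of c t] t_out no_arc_t by blast
  then show ?thesis by blast
qed

lemma reachmap_single_out: "outmap n arc x = {c} \<Longrightarrow> reachmap n arc x \<subseteq> {c} \<union> reachmap n arc (symdiff x {c})"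
proof
  fix j assume o: "outmap n arc x = {c}" and j: "j \<in> reachmap n arc x"
  show "j \<in> {c} \<union> reachmap n arc (symdiff x {c})"
    using reachmap_step[OF j]
  proof
    assume "j \<in> outmap n arc x" then show ?thesis using o by blast
  next
    assume "\<exists>y. arc x y \<and> j \<in> reachmap n arc y"
    then obtain y where y: "arc x y" "j \<in> reachmap n arc y" by blast
    obtain k where "k \<in> outmap n arc x" "y = symdiff x {k}" using arc_outmap[OF y(1)] by blast
    then have "y = symdiff x {c}" using o by auto
    then show ?thesis using y(2) by blast
  qed
qed

lemma witness:
  assumes v: "v \<in> cube n" and u: "u \<in> cube n" and o: "outmap n arc u \<inter> symdiff v u = {}"
    and k: "card (symdiff v u) \<le> k" and ne: "reachmap n arc u \<noteq> reachmap n arc v"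
  shows "covered n arc k v u"
proof -
  have p: "(v,u) \<in> (arcs arc) ^^ card (symdiff v u)" using path[OF v u o] .
  then have "dist_le arc v u k" unfolding dist_le_def using k by blast
  moreover have "(v,u) \<in> (arcs arc)\<^sup>*" using p relpow_imp_rtrancl by blast
  then have "reachmap n arc u \<subseteq> reachmap n arc v" using reachmap_mono v by blast
  ultimately show ?thesis using ne unfolding covered_def by blast
qed

end




lemma sd_assoc: "symdiff (symdiff b S) T = symdiff b (symdiff S T)"
  by (rule set_eqI) auto

lemma sd_cancel: "symdiff (symdiff b S) (symdiff b T) = symdiff S T"
  by (rule set_eqI) auto

lemma sd_compl: "v \<subseteq> I \<Longrightarrow> S \<subseteq> I \<Longrightarrow> symdiff v (symdiff (I - v) S) = I - S"
  by (rule set_eqI) auto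

lemma sd_solve: "v \<subseteq> I \<Longrightarrow> x \<subseteq> I \<Longrightarrow> symdiff v x = I - S \<Longrightarrow> S \<subseteq> I \<Longrightarrow> x = symdiff (I - v) S"
proof (rule set_eqI)
  fix y assume a: "v \<subseteq> I" "x \<subseteq> I" "symdiff v x = I - S" "S \<subseteq> I"
  have "y \<in> symdiff v x \<longleftrightarrow> y \<in> I - S" using a(3) by simp
  then show "y \<in> x \<longleftrightarrow> y \<in> symdiff (I - v) S" using a(1,2,4) by auto
qed

lemma sd_t: "v \<subseteq> I \<Longrightarrow> t \<subseteq> I \<Longrightarrow> symdiff (I - v) (I - symdiff v t) = t"
  by (rule set_eqI) auto

lemma sd_lit1: "d \<noteq> a \<Longrightarrow> d \<noteq> c \<Longrightarrow> symdiff {a,c} {d} = {a,c,d}"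
  by (rule set_eqI) auto
lemma sd_lit2: "a \<noteq> c \<Longrightarrow> a \<noteq> d \<Longrightarrow> c \<noteq> d \<Longrightarrow> symdiff {a,c,d} {c} = {a,d}"
  by (rule set_eqI) auto
lemma sd_lit3: "a \<noteq> c \<Longrightarrow> a \<noteq> d \<Longrightarrow> c \<noteq> d \<Longrightarrow> symdiff {a,c,d} {d} = {a,c}"
  by (rule set_eqI) auto
lemma sd_lit4: "a \<noteq> c \<Longrightarrow> symdiff {a} {c} = {a,c}"
  by (rule set_eqI) auto
lemma sd_lit5: "a \<noteq> c \<Longrightarrow> symdiff {a,c} {a} = {c}"
  by (rule set_eqI) auto
lemma sd_lit6: "a \<noteq> c \<Longrightarrow> symdiff {a,c} {c} = {a}"
  by (rule set_eqI) auto
lemma sd_lit7: "a \<noteq> c \<Longrightarrow> a \<noteq> d \<Longrightarrow> c \<noteq> d \<Longrightarrow> symdiff {a} {a,c,d} = {c,d}"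
  by (rule set_eqI) auto
lemma sd_empty [simp]: "symdiff b {} = b"
  by (rule set_eqI) auto

context auso_t
begin

lemma T1:
  assumes b: "b \<in> cube n" and a: "a \<in> {1..n}" and c: "c \<in> {1..n}" and d: "d \<in> {1..n}"
    and dist: "a \<noteq> c" "a \<noteq> d" "c \<noteq> d"
    and atom: "outmap n arc (symdiff b {a}) = {a}"
    and z: "arc (symdiff b {a,c}) (symdiff b {a,c,d})"
  shows "arc (symdiff b {a,c,d}) (symdiff b {a,d})"
proof (rule ccontr)
  assume na: "\<not> arc (symdiff b {a,c,d}) (symdiff b {a,d})"
  define u where "u = symdiff b {a}"
  define y where "y = symdiff b {a,c,d}"
  have J: "{c,d} \<subseteq> {1..n}" using c d by blast
  have uc: "u \<in> cube n" unfolding u_def using symdiff_in_cube[OF b, of "{a}"] a by blast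
  have yc: "y \<in> cube n" unfolding y_def using symdiff_in_cube[OF b, of "{a,c,d}"] a c d by blast
  have uF: "u \<in> face n {c,d} u" using face_self[OF uc] .
  have "symdiff u y = {c,d}" unfolding u_def y_def using sd_cancel sd_lit7[OF dist] by simp
  then have yF: "y \<in> face n {c,d} u" using yc by (simp add: face_def)
  have "outmap n arc u \<inter> {c,d} = {}" using atom dist unfolding u_def by auto
  then have us: "is_sink_in arc (face n {c,d} u) u" using sink_char[OF J uF] by blast
  have yc1: "symdiff y {c} = symdiff b {a,d}" unfolding y_def using sd_assoc sd_lit2[OF dist] by simp
  have yd1: "symdiff y {d} = symdiff b {a,c}" unfolding y_def using sd_assoc sd_lit3[OF dist] by simp
  have "c \<notin> outmap n arc y" using na yc1 outmap_iff unfolding y_def by auto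
  moreover have "d \<notin> outmap n arc y"
  proof
    assume "d \<in> outmap n arc y"
    then have "arc y (symdiff b {a,c})" using outmap_iff yd1 by auto
    then show False using arc_asym z unfolding y_def by blast
  qed
  ultimately have "outmap n arc y \<inter> {c,d} = {}" by blast
  then have ys: "is_sink_in arc (face n {c,d} u) y" using sink_char[OF J yF] by blast
  have "u = y" using unique_sink[OF J uc us ys] .
  moreover have "c \<in> symdiff u y" using \<open>symdiff u y = {c,d}\<close> by blast
  ultimately show False by simp
qed

lemma fin_arcs: "finite (arcs arc)"
proof -
  have "arcs arc \<subseteq> cube n \<times> cube n" unfolding arcs_def using arc_cube1 arc_cube2 by blast
  moreover have "finite (cube n \<times> cube n)" by (simp add: cube_def)
  ultimately show ?thesis by (rule finite_subset)
qed

lemma wf_rev: "wf (((arcs arc)\<^sup>+)\<inverse>)"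
proof -
  have "acyclic (arcs arc)" unfolding acyclic_def using acyc by blast
  then have "wf ((arcs arc)\<inverse>)" using finite_acyclic_wf_converse fin_arcs by blast
  then have "wf (((arcs arc)\<inverse>)\<^sup>+)" by (rule wf_trancl)
  then show ?thesis by (simp add: trancl_converse)
qed

end




context auso_t
begin

lemma pred_step:
  assumes r: "(w0, q a) \<in> (arcs arc)\<^sup>*" and ne: "w0 \<noteq> q a" and a: "a \<in> {1..n}"
    and qa: "q a = symdiff b {a}"
  shows "\<exists>c. c \<in> {1..n} \<and> c \<noteq> a \<and> (w0, symdiff b {a,c}) \<in> (arcs arc)\<^sup>*
            \<and> c \<in> outmap n arc (symdiff b {a,c})"
proof -
  have "(w0, q a) \<in> (arcs arc)\<^sup>+" using rtranclD[OF r] ne by blast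
  from tranclD2[OF this] obtain p where p0: "(w0,p) \<in> (arcs arc)\<^sup>*" "(p, q a) \<in> arcs arc" by blast
  have p: "(w0,p) \<in> (arcs arc)\<^sup>*" "arc p (q a)" using p0 by simp_all
  obtain c where c: "c \<in> outmap n arc p" "q a = symdiff p {c}" using arc_outmap[OF p(2)] by blast
  have cn: "c \<in> {1..n}" using c(1) outmap_sub by blast
  have pq: "p = symdiff (q a) {c}" using c(2) sd_assoc by simp
  have ca: "c \<noteq> a"
  proof
    assume "c = a"
    then have "arc (q a) p" using q_out[OF a] outmap_iff pq by auto
    then show False using arc_asym p(2) by blast
  qed
  have "p = symdiff b {a,c}" using pq qa sd_assoc sd_lit4[OF ca[symmetric]] by simp
  then show ?thesis using cn ca p(1) c(1) by blast
qed

theorem main: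
  assumes n4: "4 \<le> n" and v: "v \<in> cube n" and ns: "outmap n arc v \<noteq> {}"
  shows "\<exists>u\<in>cube n. covered n arc (n - 2) v u"
proof -
  define D where "D = symdiff v t"
  define R where "R = reachmap n arc v"
  have Dn: "D \<subseteq> {1..n}" unfolding D_def using symdiff_cube[OF v t_cube] .
  have finD: "finite D" using Dn finite_subset by blast
  have vsub: "v \<subseteq> {1..n}" using v cube_iff by blast
  have tsub: "t \<subseteq> {1..n}" using t_cube cube_iff by blast
  show ?thesis
  proof (cases "card D \<le> n - 2")
    case True
    have "reachmap n arc t \<noteq> R" using reachmap_t ns outmap_reachmap unfolding R_def by blast
    then have "covered n arc (n-2) v t"
      using witness[OF v t_cube _ True[unfolded D_def]] t_out R_def by simp
    then show ?thesis using t_cube by blast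
  next
    case False
    then have cD: "n - 1 \<le> card D" by linarith
    have aD: "a \<in> {1..n} \<and> a \<notin> symdiff v (q a) \<and> symdiff v (q a) \<subseteq> {1..n} - {a}
        \<and> outmap n arc (q a) \<inter> symdiff v (q a) = {} \<and> (v, q a) \<in> (arcs arc)\<^sup>*" if a: "a \<in> D" for a
    proof -
      have an: "a \<in> {1..n}" using a Dn by blast
      have n1: "a \<notin> symdiff v (q a)" using a q_side[OF an] unfolding D_def by simp
      have n2: "symdiff v (q a) \<subseteq> {1..n} - {a}" using n1 symdiff_cube[OF v q_cube[OF an]] by blast
      have n3: "outmap n arc (q a) \<inter> symdiff v (q a) = {}" using n1 q_out[OF an] by auto
      have "(v, q a) \<in> (arcs arc)\<^sup>*" using path_rt[OF v q_cube[OF an] n3] .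
      then show ?thesis using an n1 n2 n3 by blast
    qed
    have DR: "D \<subseteq> R"
    proof
      fix a assume a: "a \<in> D"
      then show "a \<in> R" using aD[OF a] reachmap_iff[OF v] unfolding R_def by blast
    qed
    have Rn: "R \<subseteq> {1..n}" unfolding R_def by (rule reachmap_sub)
    define Full where "Full a \<longleftrightarrow> R \<subseteq> reachmap n arc (q a)" for a
    have one_full: "a = a'" if "a \<in> R" "a' \<in> R" "Full a" "Full a'" for a a'
    proof -
      have an: "a \<in> {1..n}" and an': "a' \<in> {1..n}" using that Rn by blast+
      have m1: "a' \<in> reachmap n arc (q a)" using that(2,3) unfolding Full_def by blast
      have m2: "a \<in> reachmap n arc (q a')" using that(1,4) unfolding Full_def by blast
      have "(q a, q a') \<in> (arcs arc)\<^sup>*" using iffD1[OF reachmap_iff[OF q_cube[OF an] an'] m1] .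
      moreover have "(q a', q a) \<in> (arcs arc)\<^sup>*" using iffD1[OF reachmap_iff[OF q_cube[OF an'] an] m2] .
      ultimately have e: "q a = q a'" by (rule antisym_reach)
      have "{a} = outmap n arc (q a)" using q_out[OF an] by simp
      also have "\<dots> = outmap n arc (q a')" using e by simp
      also have "\<dots> = {a'}" using q_out[OF an'] by simp
      finally show ?thesis by blast
    qed
    show ?thesis
    proof (cases "\<exists>a\<in>D. \<not> Full a \<and> card (symdiff v (q a)) \<le> n - 2")
      case True
      then obtain a where a: "a \<in> D" "\<not> Full a" "card (symdiff v (q a)) \<le> n - 2" by blast
      have an: "a \<in> {1..n}" using a Dn by blast
      have "reachmap n arc (q a) \<noteq> R" using a(2) unfolding Full_def by blast
      then have "covered n arc (n-2) v (q a)"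
        using witness[OF v q_cube[OF an] _ a(3)] aD[OF a(1)] R_def by blast
      then show ?thesis using q_cube[OF an] by blast
    next
      case False
      define A where "A = {a \<in> D. \<not> Full a}"
      define b where "b = {1..n} - v"
      define E where "E = {1..n} - D"
      have AD: "A \<subseteq> D" unfolding A_def by blast
      have An: "A \<subseteq> {1..n}" using AD Dn by blast
      have bc: "b \<in> cube n" unfolding b_def cube_iff by blast
      have qA: "q a = symdiff b {a}" if a: "a \<in> A" for a
      proof -
        have aD': "a \<in> D" and nf: "\<not> Full a" using a unfolding A_def by blast+
        note X = aD[OF aD']
        have "\<not> card (symdiff v (q a)) \<le> n - 2" using False aD' nf by blast
        then have c1: "n - 1 \<le> card (symdiff v (q a))" by linarith
        have c2: "card ({1..n} - {a}) = n - 1" using X by simp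
        have fin: "finite ({1..n} - {a})" by simp
        have sub: "symdiff v (q a) \<subseteq> {1..n} - {a}" using X by blast
        have "card (symdiff v (q a)) \<le> card ({1..n} - {a})" using card_mono[OF fin sub] .
        then have "card (symdiff v (q a)) = card ({1..n} - {a})" using c1 c2 by linarith
        then have "symdiff v (q a) = {1..n} - {a}" using card_subset_eq[OF fin sub] by blast
        moreover have "q a \<subseteq> {1..n}" using q_cube X cube_iff by blast
        ultimately show ?thesis unfolding b_def using sd_solve[OF vsub] X by blast
      qed
      have atom: "outmap n arc (symdiff b {a}) = {a}" if "a \<in> A" for a
      proof -
        have an1: "a \<in> {1..n}" using that An by blast
        show ?thesis using q_out[OF an1] unfolding qA[OF that] .
      qed
      have one: "f = f'" if "f \<in> D - A" "f' \<in> D - A" for f f'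
        using one_full that DR unfolding A_def by blast
      have cDA: "card (D - A) \<le> 1"
      proof -
        have "\<forall>a1\<in>D - A. \<forall>a2\<in>D - A. a1 = a2" using one by blast
        moreover have "finite (D - A)" using finD by blast
        ultimately show ?thesis using card_le_Suc0_iff_eq[of "D - A"] by simp
      qed
      have cardA: "2 \<le> card A"
      proof -
        have "D = A \<union> (D - A)" using AD by blast
        then have "card D \<le> card A + card (D - A)" using card_Un_le[of A "D - A"] by simp
        then show ?thesis using cDA cD n4 by linarith
      qed
      have finA: "finite A" using finD AD finite_subset by blast
      obtain a1 a2 where a12: "a1 \<in> A" "a2 \<in> A" "a1 \<noteq> a2"
      proof -
        have "\<not> card A \<le> Suc 0" using cardA by simp
        then show ?thesis using that card_le_Suc0_iff_eq[OF finA] by blast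
      qed
      have Esing: "symdiff b {e} = t" if e: "e \<in> E" for e
      proof -
        have cE: "card E = n - card D" unfolding E_def using card_Diff_subset[OF finD Dn] by simp
        have "card E \<le> Suc 0" using cE cD by linarith
        then have "E = {e}" using card_le_Suc0_iff_eq[of E] e unfolding E_def by blast
        then show ?thesis using sd_t[OF vsub tsub] unfolding b_def E_def D_def by simp
      qed
      have rb: "a \<notin> reachmap n arc b" if a: "a \<in> A" for a
      proof
        assume "a \<in> reachmap n arc b"
        then have r: "(b, q a) \<in> (arcs arc)\<^sup>*" using reachmap_iff[OF bc] a An by blast
        have "arc (q a) (symdiff (q a) {a})" using q_out a An outmap_iff by blast
        moreover have "symdiff (q a) {a} = b" using qA[OF a] sd_assoc by simp
        ultimately have "arc (q a) b" by simp
        then show False using cyc r by blast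
      qed
      have ratom: "reachmap n arc (symdiff b {c}) \<subseteq> {c} \<union> reachmap n arc b" if c: "c \<in> A \<union> E" for c
      proof (cases "c \<in> A")
        case True
        have "symdiff (symdiff b {c}) {c} = b" using sd_assoc by simp
        then show ?thesis using reachmap_single_out[OF atom[OF True]] by simp
      next
        case False
        then have "c \<in> E" using c by blast
        then show ?thesis using Esing reachmap_t by simp
      qed
      have Dsub: "D - A \<subseteq> {f}" if "f \<in> D - A" for f using one that by blast
      have start: "\<exists>w0. w0 \<in> cube n \<and> (\<forall>w. (w0,w) \<in> (arcs arc)\<^sup>* \<longrightarrow> outmap n arc w \<subseteq> A \<union> E)
          \<and> (D - A = {} \<or> (\<exists>f\<in>D - A. \<forall>w. (w0,w) \<in> (arcs arc)\<^sup>* \<longrightarrow> f \<notin> reachmap n arc w))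
          \<and> (\<exists>a c. a \<in> A \<and> c \<in> A \<union> E \<and> a \<noteq> c \<and> (w0, symdiff b {a,c}) \<in> (arcs arc)\<^sup>*)"
      proof (cases "D - A = {}")
        case True
        have W1: "\<forall>w. (v,w) \<in> (arcs arc)\<^sup>* \<longrightarrow> outmap n arc w \<subseteq> A \<union> E"
          using outmap_sub True unfolding E_def by blast
        have a1D: "a1 \<in> D" using a12 AD by blast
        note X = aD[OF a1D]
        have nf: "\<not> Full a1" using a12 unfolding A_def by blast
        have "\<not> card (symdiff v (q a1)) \<le> n - 2" using False a1D nf by blast
        then have "symdiff v (q a1) \<noteq> {}" by (metis card.empty zero_le)
        then have ne: "v \<noteq> q a1" by auto
        obtain c where c: "c \<in> {1..n}" "c \<noteq> a1" "(v, symdiff b {a1,c}) \<in> (arcs arc)\<^sup>*"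
          using pred_step[OF conjunct2[OF conjunct2[OF conjunct2[OF conjunct2[OF X]]]] ne conjunct1[OF X] qA[OF a12(1)]]
          by blast
        have "c \<in> A \<union> E" using c(1) True unfolding E_def by blast
        then show ?thesis using v W1 True a12(1) c(2,3) by blast
      next
        case False
        then obtain f where f: "f \<in> D - A" by blast
        have fn: "f \<in> {1..n}" using f Dn by blast
        have Ff: "Full f" using f unfolding A_def by blast
        define y0 where "y0 = symdiff (q f) {f}"
        have ay0: "arc (q f) y0" using q_out[OF fn] outmap_iff unfolding y0_def by blast
        have y0c: "y0 \<in> cube n" using arc_cube2[OF ay0] .
        have nofr: "f \<notin> reachmap n arc w" if w: "(y0,w) \<in> (arcs arc)\<^sup>*" for w
        proof
          assume "f \<in> reachmap n arc w"
          then have "(w, q f) \<in> (arcs arc)\<^sup>*" using reachmap_iff[OF reach_cube[OF w y0c] fn] by blast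
          then have "(y0, q f) \<in> (arcs arc)\<^sup>*" using w by (rule rtrancl_trans[rotated])
          then show False using cyc ay0 by blast
        qed
        have W1: "outmap n arc w \<subseteq> A \<union> E" if w: "(y0,w) \<in> (arcs arc)\<^sup>*" for w
        proof
          fix d assume d: "d \<in> outmap n arc w"
          have "d \<noteq> f" using nofr[OF w] d outmap_reachmap by blast
          moreover have "d \<in> {1..n}" using d outmap_sub by blast
          ultimately show "d \<in> A \<union> E" using Dsub[OF f] unfolding E_def by blast
        qed
        have rq: "reachmap n arc (q f) \<subseteq> {f} \<union> reachmap n arc y0"
          using reachmap_single_out[OF q_out[OF fn]] unfolding y0_def .
        obtain a a'' where aa: "a \<in> A" "a'' \<in> A" "a \<noteq> a''" using a12 by blast
        have an: "a \<in> {1..n}" using aa An by blast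
        have af: "a \<noteq> f" using aa f by blast
        have "a \<in> R" using aa AD DR by blast
        then have "a \<in> reachmap n arc (q f)" using Ff unfolding Full_def by blast
        then have "a \<in> reachmap n arc y0" using rq af by blast
        then have ry: "(y0, q a) \<in> (arcs arc)\<^sup>*" using reachmap_iff[OF y0c an] by blast
        have ne: "y0 \<noteq> q a"
        proof
          assume e: "y0 = q a"
          have "a'' \<in> R" using aa AD DR by blast
          then have "a'' \<in> reachmap n arc (q f)" using Ff unfolding Full_def by blast
          then have "a'' \<in> {f} \<union> reachmap n arc (q a)" using rq e by blast
          moreover have "reachmap n arc (q a) \<subseteq> {a} \<union> reachmap n arc b"
            using ratom[of a] aa qA[OF aa(1)] by simp
          moreover have "a'' \<noteq> f" using aa f by blast
          ultimately show False using aa rb[OF aa(2)] by blast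
        qed
        obtain c where c: "c \<in> {1..n}" "c \<noteq> a" "(y0, symdiff b {a,c}) \<in> (arcs arc)\<^sup>*"
            "c \<in> outmap n arc (symdiff b {a,c})"
          using pred_step[OF ry ne an qA[OF aa(1)]] by blast
        have "c \<noteq> f" using c(3,4) nofr outmap_reachmap by blast
        then have "c \<in> A \<union> E" using c(1) Dsub[OF f] unfolding E_def by blast
        then show ?thesis using y0c W1 f nofr aa(1) c(2,3) by blast
      qed
      then obtain w0 where w0: "w0 \<in> cube n"
        and W1: "\<And>w. (w0,w) \<in> (arcs arc)\<^sup>* \<Longrightarrow> outmap n arc w \<subseteq> A \<union> E"
        and W2: "D - A = {} \<or> (\<exists>f\<in>D - A. \<forall>w. (w0,w) \<in> (arcs arc)\<^sup>* \<longrightarrow> f \<notin> reachmap n arc w)"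
        and W3: "\<exists>a c. a \<in> A \<and> c \<in> A \<union> E \<and> a \<noteq> c \<and> (w0, symdiff b {a,c}) \<in> (arcs arc)\<^sup>*"
        by blast
      define typd where "typd z \<longleftrightarrow> (\<exists>a c. a \<in> A \<and> c \<in> A \<union> E \<and> a \<noteq> c \<and> z = symdiff b {a,c}
          \<and> (w0, z) \<in> (arcs arc)\<^sup>*)" for z
      define exa where "exa z \<longleftrightarrow> (\<exists>a c. a \<in> A \<and> c \<in> A \<union> E \<and> a \<noteq> c \<and> z = symdiff b {a,c}
          \<and> (w0, z) \<in> (arcs arc)\<^sup>* \<and> outmap n arc z \<subseteq> {a,c})" for z
      have AEn: "A \<union> E \<subseteq> {1..n}" using An unfolding E_def by blast
      have stp: "exa z \<or> (\<exists>z'. typd z' \<and> (z,z') \<in> (arcs arc)\<^sup>+)" if tz: "typd z" for z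
      proof -
        obtain a c where ac: "a \<in> A" "c \<in> A \<union> E" "a \<noteq> c" "z = symdiff b {a,c}" "(w0, z) \<in> (arcs arc)\<^sup>*"
          using tz unfolding typd_def by blast
        show ?thesis
        proof (cases "outmap n arc z \<subseteq> {a,c}")
          case True
          then show ?thesis using ac unfolding exa_def by blast
        next
          case False
          then obtain d where d: "d \<in> outmap n arc z" "d \<notin> {a,c}" by blast
          have dAE: "d \<in> A \<union> E" using W1[OF ac(5)] d(1) by blast
          have an: "a \<in> {1..n}" and cn: "c \<in> {1..n}" and dn: "d \<in> {1..n}" using ac(1,2) dAE AEn An by blast+
          have yz: "symdiff z {d} = symdiff b {a,c,d}" using ac(4) sd_assoc sd_lit1[of d a c] d(2) by simp
          have az: "arc z (symdiff b {a,c,d})" using d(1) outmap_iff yz by auto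
          have dist: "a \<noteq> c" "a \<noteq> d" "c \<noteq> d" using ac(3) d(2) by auto
          have ay: "arc (symdiff b {a,c,d}) (symdiff b {a,d})"
            using T1[OF bc an cn dn dist atom[OF ac(1)]] az ac(4) by blast
          have s1: "(z, symdiff b {a,c,d}) \<in> arcs arc" using az by simp
          have s2: "(symdiff b {a,c,d}, symdiff b {a,d}) \<in> arcs arc" using ay by simp
          have "(z, symdiff b {a,d}) \<in> (arcs arc)\<^sup>+" using trancl_into_trancl[OF r_into_trancl[OF s1] s2] .
          moreover have "(w0, symdiff b {a,d}) \<in> (arcs arc)\<^sup>*"
            using rtrancl_into_rtrancl[OF rtrancl_into_rtrancl[OF ac(5) s1] s2] .
          then have "typd (symdiff b {a,d})"
            unfolding typd_def using ac(1) dAE dist(2) by blast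
          ultimately show ?thesis by blast
        qed
      qed
      have ind: "typd z \<longrightarrow> (\<exists>z'. exa z')" for z
      proof (rule wf_induct[OF wf_rev, where P = "\<lambda>z. typd z \<longrightarrow> (\<exists>z'. exa z')"])
        fix z assume IH: "\<forall>y. (y, z) \<in> ((arcs arc)\<^sup>+)\<inverse> \<longrightarrow> typd y \<longrightarrow> (\<exists>z'. exa z')"
        show "typd z \<longrightarrow> (\<exists>z'. exa z')"
        proof
          assume "typd z"
          then show "\<exists>z'. exa z'" using stp IH by blast
        qed
      qed
      obtain z0 where "typd z0" using W3 unfolding typd_def by blast
      then obtain z where "exa z" using ind by blast
      then obtain a c where ac: "a \<in> A" "c \<in> A \<union> E" "a \<noteq> c" "z = symdiff b {a,c}"
          "(w0, z) \<in> (arcs arc)\<^sup>*" "outmap n arc z \<subseteq> {a,c}"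
        unfolding exa_def by blast
      have an: "a \<in> {1..n}" and cn: "c \<in> {1..n}" using ac(1,2) AEn An by blast+
      have acn: "{a,c} \<subseteq> {1..n}" using an cn by blast
      have zc: "z \<in> cube n" using ac(4) symdiff_in_cube[OF bc acn] by simp
      have svz: "symdiff v z = {1..n} - {a,c}" unfolding ac(4) b_def using sd_compl[OF vsub acn] .
      have o: "outmap n arc z \<inter> symdiff v z = {}" using svz ac(6) by blast
      have "card (symdiff v z) = n - 2" using svz card_Diff_subset[of "{a,c}" "{1..n}"] acn ac(3) by simp
      then have k: "card (symdiff v z) \<le> n - 2" by simp
      have rz: "reachmap n arc z \<subseteq> {a,c} \<union> reachmap n arc b"
      proof
        fix j assume j: "j \<in> reachmap n arc z"
        show "j \<in> {a,c} \<union> reachmap n arc b"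
          using reachmap_step[OF j]
        proof
          assume "j \<in> outmap n arc z" then show ?thesis using ac(6) by blast
        next
          assume "\<exists>y. arc z y \<and> j \<in> reachmap n arc y"
          then obtain y where y: "arc z y" "j \<in> reachmap n arc y" by blast
          obtain k where k: "k \<in> outmap n arc z" "y = symdiff z {k}" using arc_outmap[OF y(1)] by blast
          have "k = a \<or> k = c" using k(1) ac(6) by blast
          then show ?thesis
          proof
            assume "k = a"
            then have "y = symdiff b {c}" using k(2) ac(4) sd_assoc sd_lit5[OF ac(3)] by simp
            then show ?thesis using ratom[OF ac(2)] y(2) by blast
          next
            assume "k = c"
            then have "y = symdiff b {a}" using k(2) ac(4) sd_assoc sd_lit6[OF ac(3)] by simp
            then show ?thesis using ratom[of a] ac(1) y(2) by blast
          qed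
        qed
      qed
      have "\<exists>g. g \<in> R \<and> g \<notin> reachmap n arc z"
      proof (cases "\<exists>g. g \<in> A - {a,c}")
        case True
        then obtain g where g: "g \<in> A - {a,c}" by blast
        have "g \<in> R" using g AD DR by blast
        moreover have "g \<notin> reachmap n arc z" using rz g rb by blast
        ultimately show ?thesis by blast
      next
        case False
        then have Aac: "A \<subseteq> {a,c}" by blast
        show ?thesis using W2
        proof
          assume "D - A = {}"
          then have "D \<subseteq> {a,c}" using Aac by blast
          then have "card D \<le> card {a,c}" using card_mono[of "{a,c}" D] by simp
          also have "\<dots> \<le> 2" by (simp add: card_insert_if)
          finally show ?thesis using cD n4 by linarith
        next
          assume "\<exists>f\<in>D - A. \<forall>w. (w0,w) \<in> (arcs arc)\<^sup>* \<longrightarrow> f \<notin> reachmap n arc w"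
          then obtain f where f: "f \<in> D - A" "\<forall>w. (w0,w) \<in> (arcs arc)\<^sup>* \<longrightarrow> f \<notin> reachmap n arc w" by blast
          have "f \<in> R" using f DR by blast
          moreover have "f \<notin> reachmap n arc z" using f(2) ac(5) by blast
          ultimately show ?thesis by blast
        qed
      qed
      then have ne: "reachmap n arc z \<noteq> R" by blast
      have "covered n arc (n-2) v z" using witness[OF v zc o k] ne unfolding R_def by blast
      then show ?thesis using zc by blast
    qed
  qed
qed

end



theorem theorem13:
  fixes n :: nat and arc :: "nat set \<Rightarrow> nat set \<Rightarrow> bool"
  assumes "n \<ge> 4" and "AUSO n arc"
  shows "nice n arc (n - 2)"
proof -
  interpret auso n arc by (rule auso.intro) (rule assms(2))
  obtain t where t: "t \<in> cube n" "outmap n arc t = {}" using ex_gsink by blast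
  interpret T: auso_t n arc t by (rule auso_t.intro, rule auso.intro, rule assms(2), unfold_locales, rule t(1), rule t(2))
  show ?thesis unfolding nice_def global_sink_def using T.main assms(1) by blast
qed

end
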